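(* Let $(G,k)$ be an instance of \textsc{Paw-free Edge Editing} with $k>0$ such that there is no independent set of $k+3$ vertices of $G$ all having the same neighborhood. Let $S$ be the set of vertices covered by a maximal (under inclusion) collection of pairwise edge-disjoint induced paws in $G$. Let $s_1,s_2$ be two adjacent vertices of $G$. If there are more than $4k+6$ vertices that belong to triangle-free connected components of $G-S$ and are adjacent to both $s_1$ and $s_2$, then either $(G,k)$ is a no-instance, or every solution $A$ of $(G,k)$ contains the pair $s_1s_2$.
   Context: The paw is the graph on four vertices $x_1,x_2,x_3,x_4$ with edges $x_1x_2,x_2x_3,x_1x_3,x_3x_4$; a graph is paw-free if it has no induced paw. For a set $A$ of unordered vertex pairs, $G\Delta A$ is the graph on $V(G)$ with edge set the symmetric difference of $E(G)$ and $A$. An instance $(G,k)$ of \textsc{Paw-free Edge Editing} asks whether some set $A$ of at most $k$ vertex pairs makes $G\Delta A$ paw-free; such an $A$ is a solution. Neighborhoods are open neighborhoods $N(v)$. *)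

theory Defs
  imports Main
begin

definition vpairs :: "'a set \<Rightarrow> 'a set set" where
  "vpairs V = {e. e \<subseteq> V \<and> card e = 2}"

definition graph :: "'a set \<Rightarrow> 'a set set \<Rightarrow> bool" where
  "graph V E \<longleftrightarrow> finite V \<and> E \<subseteq> vpairs V"

definition adj :: "'a set set \<Rightarrow> 'a \<Rightarrow> 'a \<Rightarrow> bool" where
  "adj E u v \<longleftrightarrow> {u, v} \<in> E"

definition nbhd :: "'a set \<Rightarrow> 'a set set \<Rightarrow> 'a \<Rightarrow> 'a set" where
  "nbhd V E v = {u \<in> V. adj E v u}"

definition edit :: "'a set set \<Rightarrow> 'a set set \<Rightarrow> 'a set set" where
  "edit E A = (E - A) \<union> (A - E)"

definition induced_paw :: "'a set \<Rightarrow> 'a set set \<Rightarrow> 'a set \<Rightarrow> bool" where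
  "induced_paw V E P \<longleftrightarrow> (\<exists>x1 x2 x3 x4.
      P = {x1, x2, x3, x4} \<and> P \<subseteq> V \<and> distinct [x1, x2, x3, x4] \<and>
      adj E x1 x2 \<and> adj E x2 x3 \<and> adj E x1 x3 \<and> adj E x3 x4 \<and>
      \<not> adj E x1 x4 \<and> \<not> adj E x2 x4)"

definition paw_free :: "'a set \<Rightarrow> 'a set set \<Rightarrow> bool" where
  "paw_free V E \<longleftrightarrow> (\<nexists>P. induced_paw V E P)"

definition is_solution :: "'a set \<Rightarrow> 'a set set \<Rightarrow> nat \<Rightarrow> 'a set set \<Rightarrow> bool" where
  "is_solution V E k A \<longleftrightarrow> A \<subseteq> vpairs V \<and> card A \<le> k \<and> paw_free V (edit E A)"

definition paw_edges :: "'a set set \<Rightarrow> 'a set \<Rightarrow> 'a set set" where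
  "paw_edges E P = {e \<in> E. e \<subseteq> P}"

definition edge_disjoint_paws :: "'a set \<Rightarrow> 'a set set \<Rightarrow> 'a set set \<Rightarrow> bool" where
  "edge_disjoint_paws V E C \<longleftrightarrow> (\<forall>P\<in>C. induced_paw V E P) \<and>
     (\<forall>P\<in>C. \<forall>Q\<in>C. P \<noteq> Q \<longrightarrow> paw_edges E P \<inter> paw_edges E Q = {})"

definition maximal_edge_disjoint_paws :: "'a set \<Rightarrow> 'a set set \<Rightarrow> 'a set set \<Rightarrow> bool" where
  "maximal_edge_disjoint_paws V E C \<longleftrightarrow> edge_disjoint_paws V E C \<and>
     (\<forall>C'. C \<subseteq> C' \<and> edge_disjoint_paws V E C' \<longrightarrow> C' = C)"

definition comp :: "'a set \<Rightarrow> 'a set set \<Rightarrow> 'a \<Rightarrow> 'a set" where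
  "comp W E v = {u. (\<lambda>x y. x \<in> W \<and> y \<in> W \<and> adj E x y)\<^sup>*\<^sup>* v u}"

definition triangle_free_set :: "'a set set \<Rightarrow> 'a set \<Rightarrow> bool" where
  "triangle_free_set E X \<longleftrightarrow> (\<nexists>a b c. a \<in> X \<and> b \<in> X \<and> c \<in> X \<and>
      adj E a b \<and> adj E b c \<and> adj E a c)"

definition independent :: "'a set set \<Rightarrow> 'a set \<Rightarrow> bool" where
  "independent E I \<longleftrightarrow> (\<forall>u\<in>I. \<forall>v\<in>I. \<not> adj E u v)"

end

theory Submission
  imports Defs
begin

lemma adj_sym: "adj F a b = adj F b a"
  unfolding adj_def by (simp add: insert_commute)

lemma key_paw:
  assumes pf: "paw_free V F"
    and good: "\<And>a b. adj F a b \<Longrightarrow> a \<noteq> b \<and> a \<in> V \<and> b \<in> V"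
    and h: "adj F s1 s2" "adj F x s1" "adj F x s2" "adj F y s1" "adj F y s2"
       "\<not> adj F x y" "x \<noteq> y" "adj F x u"
  shows "adj F y u"
proof (rule ccontr)
  assume nu: "\<not> adj F y u"
  have sym: "\<And>a b. adj F a b = adj F b a" by (rule adj_sym)
  have d: "s1 \<noteq> s2" "x \<noteq> s1" "x \<noteq> s2" "y \<noteq> s1" "y \<noteq> s2" "x \<noteq> u"
    "s1 \<in> V" "s2 \<in> V" "x \<in> V" "y \<in> V" "u \<in> V"
    using good h by blast+
  have "u \<noteq> s1" "u \<noteq> s2" "u \<noteq> y" using h nu sym by auto
  note d = d this
  show False
  proof (cases "adj F u s1")
    case True
    have "induced_paw V F {x, u, s1, y}"
      unfolding induced_paw_def
      by (rule exI[of _ x], rule exI[of _ u], rule exI[of _ s1], rule exI[of _ y])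
         (use d h nu True sym in auto)
    then show False using pf unfolding paw_free_def by blast
  next
    case F1: False
    show False
    proof (cases "adj F u s2")
      case True
      have "induced_paw V F {x, u, s2, y}"
        unfolding induced_paw_def
        by (rule exI[of _ x], rule exI[of _ u], rule exI[of _ s2], rule exI[of _ y])
           (use d h nu True sym in auto)
      then show False using pf unfolding paw_free_def by blast
    next
      case False
      have "induced_paw V F {s1, s2, x, u}"
        unfolding induced_paw_def
        by (rule exI[of _ s1], rule exI[of _ s2], rule exI[of _ x], rule exI[of _ u])
           (use d h nu False F1 sym in auto)
      then show False using pf unfolding paw_free_def by blast
    qed
  qed
qed

theorem lemma1:
  fixes V :: "'a set" and E :: "'a set set" and k :: nat and C :: "'a set set"
    and s1 s2 :: 'a
  assumes "graph V E"
    and "k > 0"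
    and "\<not> (\<exists>I. I \<subseteq> V \<and> card I = k + 3 \<and> independent E I \<and>
              (\<forall>u\<in>I. \<forall>w\<in>I. nbhd V E u = nbhd V E w))"
    and "maximal_edge_disjoint_paws V E C"
    and "S = \<Union>C"
    and "adj E s1 s2"
    and "card {v \<in> V - S. adj E v s1 \<and> adj E v s2 \<and>
                 triangle_free_set E (comp (V - S) E v)} > 4 * k + 6"
  shows "(\<nexists>A. is_solution V E k A) \<or> (\<forall>A. is_solution V E k A \<longrightarrow> {s1, s2} \<in> A)"
proof (rule disjI2, intro allI impI, rule ccontr)
  fix A assume sol: "is_solution V E k A" and nA: "{s1, s2} \<notin> A"
  define T where "T = {v \<in> V - S. adj E v s1 \<and> adj E v s2 \<and>
                 triangle_free_set E (comp (V - S) E v)}"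
  define F where "F = edit E A"
  define U where "U = \<Union>A"
  define T' where "T' = T - U"
  have finV: "finite V" and EV: "E \<subseteq> vpairs V" using assms(1) unfolding graph_def by auto
  have AV: "A \<subseteq> vpairs V" and cardA: "card A \<le> k" and pf: "paw_free V F"
    using sol unfolding is_solution_def F_def by auto
  have sym: "\<And>F a b. adj F a b = adj F b a" by (rule adj_sym)
  have goodE: "adj E a b \<Longrightarrow> a \<noteq> b \<and> a \<in> V \<and> b \<in> V" for a b
    using EV unfolding adj_def vpairs_def by (cases "a = b") auto
  have FV: "F \<subseteq> vpairs V" using EV AV unfolding F_def edit_def by auto
  have goodF: "adj F a b \<Longrightarrow> a \<noteq> b \<and> a \<in> V \<and> b \<in> V" for a b
    using FV unfolding adj_def vpairs_def by (cases "a = b") auto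
  have FE: "x \<notin> U \<Longrightarrow> adj F x u = adj E x u" for x u
    unfolding U_def F_def adj_def edit_def by auto
  have Fs: "adj F s1 s2" using assms(6) nA unfolding F_def adj_def edit_def by auto
  have finT: "finite T" using finV unfolding T_def by auto
  have finA: "finite A"
  proof -
    have "vpairs V \<subseteq> Pow V" unfolding vpairs_def by auto
    then show ?thesis using AV finV by (meson finite_Pow_iff finite_subset)
  qed
  have "card U \<le> sum card A" unfolding U_def by (rule card_Union_le_sum_card)
  also have "sum card A = sum (\<lambda>_. 2) A"
    by (rule sum.cong) (use AV in \<open>auto simp: vpairs_def\<close>)
  also have "\<dots> \<le> 2 * k" using cardA by simp
  finally have cU: "card U \<le> 2 * k" .
  have "U \<subseteq> V" unfolding U_def using AV unfolding vpairs_def by auto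
  then have finU: "finite U" using finV by (rule finite_subset)
  have "card T - card U \<le> card T'"
    unfolding T'_def by (rule diff_card_le_card_Diff[OF finU])
  have cT': "card T' \<ge> 2 * k + 7" using \<open>card T - card U \<le> card T'\<close> cU assms(7)
    unfolding T_def by linarith
  have finT': "finite T'" using finT unfolding T'_def by auto
  have T'p: "x \<in> V \<and> x \<in> V - S \<and> x \<notin> U \<and> adj E x s1 \<and> adj E x s2 \<and>
     triangle_free_set E (comp (V - S) E x)" if "x \<in> T'" for x
    using that unfolding T'_def T_def by auto
  have T'F: "adj F x s1 \<and> adj F x s2" if "x \<in> T'" for x
    using T'p[OF that] FE by auto
  have tri: False if "x \<in> T'" "y \<in> T'" "z \<in> T'" "adj E x y" "adj E y z" "adj E x z" for x y z
  proof -
    let ?R = "\<lambda>a b. a \<in> V - S \<and> b \<in> V - S \<and> adj E a b"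
    have "x \<in> comp (V - S) E x" unfolding comp_def by auto
    moreover have "y \<in> comp (V - S) E x" unfolding comp_def
      using T'p that by (intro CollectI r_into_rtranclp) auto
    moreover have "z \<in> comp (V - S) E x" unfolding comp_def
      using T'p that by (intro CollectI r_into_rtranclp) auto
    ultimately show False using T'p[OF that(1)] that unfolding triangle_free_set_def by blast
  qed
  have nb: "nbhd V E x = nbhd V E y" if "x \<in> T'" "y \<in> T'" "x \<noteq> y" "\<not> adj E x y" for x y
  proof -
    have nxy: "\<not> adj F x y" using that FE T'p by auto
    have "adj F x u = adj F y u" for u
      using key_paw[OF pf goodF Fs, of x y u] key_paw[OF pf goodF Fs, of y x u]
        T'F[OF that(1)] T'F[OF that(2)] nxy that(3) sym by metis
    then have "adj E x u = adj E y u" for u using FE T'p that by metis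
    then show ?thesis unfolding nbhd_def by auto
  qed
  define I where "I x0 = {y \<in> T'. \<not> adj E x0 y}" for x0
  have small: "card (I x0) < k + 3" if "x0 \<in> T'" for x0
  proof (rule ccontr)
    assume "\<not> card (I x0) < k + 3"
    then obtain J where J: "J \<subseteq> I x0" "card J = k + 3"
      by (meson not_less obtain_subset_with_card_n)
    have JI: "y \<in> T' \<and> \<not> adj E x0 y" if "y \<in> J" for y using J that unfolding I_def by auto
    have x0n: "\<not> adj E x0 x0" using goodE by blast
    have eqn: "nbhd V E y = nbhd V E x0" if "y \<in> J" for y
    proof (cases "y = x0")
      case False
      have "\<not> adj E y x0" using JI[OF that] adj_sym by metis
      then show ?thesis using nb[of y x0] JI[OF that] \<open>x0 \<in> T'\<close> False by blast
    qed simp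
    have "J \<subseteq> V" using JI T'p by blast
    moreover have "independent E J"
      unfolding independent_def
    proof (intro ballI notI)
      fix u v assume uv: "u \<in> J" "v \<in> J" "adj E u v"
      then have "v \<in> nbhd V E u" using goodE unfolding nbhd_def by auto
      then have "v \<in> nbhd V E x0" using eqn uv by auto
      then show False using JI[OF uv(2)] unfolding nbhd_def by auto
    qed
    moreover have "\<forall>u\<in>J. \<forall>w\<in>J. nbhd V E u = nbhd V E w" using eqn by auto
    ultimately show False using assms(3) J(2) by blast
  qed
  obtain x0 where x0: "x0 \<in> T'" using cT' by (metis card.empty ex_in_conv not_less_eq_eq zero_le le_0_eq
      add_is_0 numeral_neq_zero zero_neq_numeral)
  define N where "N = T' - I x0"
  have finI: "finite (I x0)" using finT' unfolding I_def by auto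
  have "card T' - card (I x0) \<le> card N" unfolding N_def by (rule diff_card_le_card_Diff[OF finI])
  then have cN: "card N \<ge> k + 5" using small[OF x0] cT' by linarith
  then obtain y0 where y0: "y0 \<in> N" by (metis card.empty ex_in_conv not_less_eq_eq zero_le le_0_eq
      add_is_0 numeral_neq_zero zero_neq_numeral)
  have "N \<subseteq> I y0"
  proof
    fix z assume z: "z \<in> N"
    have "\<not> adj E y0 z"
    proof
      assume "adj E y0 z"
      then show False using tri[of x0 y0 z] x0 y0 z unfolding N_def I_def by auto
    qed
    then show "z \<in> I y0" using z unfolding N_def I_def by auto
  qed
  then have "card N \<le> card (I y0)" using finT' unfolding I_def by (intro card_mono) auto
  then show False using small[of y0] y0 cN unfolding N_def by auto
qed

end
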